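(* Let $w,z\in\mathbb A$ with $w\ne0$ and $w,z$ relatively prime in $\mathbb A$, put $\theta=z/w$ and $W=\mathcal N(w)$, and suppose $c\ge1$ is such that $c^{-1}\sqrt W\le|\sigma_i(w)|\le c\sqrt W$ for $i=1,2$. Then there is a constant $c'>0$ depending only on $q$, $d$ and $c$ such that for every $k\in\mathbb A$ with $0<\mathcal N(k)<W$, $$\max\{\|\Re(k\theta)\|,\ \|\Im(k\theta)\|\}\ge c'\,W^{-1/2}.$$
   Context: $q$ is an odd prime power, $d\in\mathbb{F}_q[T]$ monic, square-free, of even degree, $\sqrt d\in k_\infty=\mathbb{F}_q((1/T))$ a fixed square root, $|\cdot|$ the absolute value on $k_\infty$ with $|\sum_{i\le n}a_iT^i|=q^n$ ($a_n\ne0$). $K=\mathbb{F}_q(T)(\sqrt d)$, $\mathbb A=\mathbb{F}_q[T][\sqrt d]$, $\sigma_1(a+b\sqrt d)=a+b\sqrt d$, $\sigma_2(a+b\sqrt d)=a-b\sqrt d$ for $a,b\in k$, $\mathcal N(w)=|\sigma_1(w)\sigma_2(w)|$. For $f=a+b\sqrt d\in K$ with $a,b\in k$: $\Re(f)=a$, $\Im(f)=b$. For $x\in k_\infty$, $\|x\|=\inf_{r\in\mathbb{F}_q[T]}|x-r|$ (the absolute value of the fractional part of $x$). *)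

theory Defs
  imports Complex_Main "HOL-Computational_Algebra.Polynomial"
    "HOL-Computational_Algebra.Formal_Laurent_Series"
    "HOL-Computational_Algebra.Squarefree"
begin

text \<open>k_infinity = F_q((1/T)) is modelled as Laurent series in the variable u = 1/T.
  A polynomial p(T) is embedded by substituting T := u^(-1).\<close>
definition emb :: "'a::field poly \<Rightarrow> 'a fls" where
  "emb p = poly (map_poly fls_const p) fls_X_inv"

text \<open>|x| = q^n for x = a_n T^n + lower terms, |0| = 0.\<close>
definition absv :: "'a::{finite,field} fls \<Rightarrow> real" where
  "absv x = (if x = 0 then 0 else real (card (UNIV :: 'a set)) powr (- real_of_int (fls_subdegree x)))"

definition fracnorm :: "'a::{finite,field} fls \<Rightarrow> real" where
  "fracnorm x = Inf ((\<lambda>r. absv (x - emb r)) ` UNIV)"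

text \<open>Arithmetic of R[sqrt D]: the pair (a,b) stands for a + b sqrt D.\<close>
definition qmul :: "'b::comm_ring_1 \<Rightarrow> 'b \<times> 'b \<Rightarrow> 'b \<times> 'b \<Rightarrow> 'b \<times> 'b" where
  "qmul D x y = (fst x * fst y + D * snd x * snd y, fst x * snd y + snd x * fst y)"

definition qdiv :: "'b::field \<Rightarrow> 'b \<times> 'b \<Rightarrow> 'b \<times> 'b \<Rightarrow> 'b \<times> 'b" where
  "qdiv D x y = (let n = fst y ^ 2 - D * snd y ^ 2;
                     p = qmul D x (fst y, - snd y) in (fst p / n, snd p / n))"

text \<open>Embedding of A = F_q[T][sqrt d] (pairs of polynomials) into K, coordinates in k_infinity.\<close>
definition embA :: "'a::field poly \<times> 'a poly \<Rightarrow> 'a fls \<times> 'a fls" where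
  "embA w = (emb (fst w), emb (snd w))"

text \<open>The two embeddings sigma_1, sigma_2 : K \<rightarrow> k_infinity, given the fixed square root s of d.\<close>
definition sigma1 :: "'a::field fls \<Rightarrow> 'a fls \<times> 'a fls \<Rightarrow> 'a fls" where
  "sigma1 s x = fst x + snd x * s"

definition sigma2 :: "'a::field fls \<Rightarrow> 'a fls \<times> 'a fls \<Rightarrow> 'a fls" where
  "sigma2 s x = fst x - snd x * s"

definition normN :: "'a::{finite,field} fls \<Rightarrow> 'a fls \<times> 'a fls \<Rightarrow> real" where
  "normN s x = absv (sigma1 s x * sigma2 s x)"

text \<open>w, z relatively prime in A: they generate the unit ideal.\<close>
definition coprimeA :: "'a::field poly \<Rightarrow> 'a poly \<times> 'a poly \<Rightarrow> 'a poly \<times> 'a poly \<Rightarrow> bool" where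
  "coprimeA d w z \<longleftrightarrow> (\<exists>x y. fst (qmul d x w) + fst (qmul d y z) = 1 \<and> snd (qmul d x w) + snd (qmul d y z) = 0)"

end

theory Submission imports Defs "HOL-Computational_Algebra.Polynomial_Factorial" begin

lemma fls_const_add': "fls_const (a + b) = fls_const a + (fls_const b :: 'a::comm_monoid_add fls)"
  by (intro fls_eqI) simp

lemma emb_0[simp]: "emb 0 = 0" by (simp add: emb_def)

lemma emb_pCons: "emb (pCons a p) = fls_const a + fls_X_inv * emb p"
  by (simp add: emb_def map_poly_pCons)

lemma emb_add: "emb (p + q) = emb p + emb q"
proof (induction p q rule: poly_induct2)
  case 0 then show ?case by simp
next
  case (pCons a p b q) then show ?case
    by (simp add: emb_pCons fls_const_add' algebra_simps)
qed

lemma emb_smult: "emb (smult a q) = fls_const a * emb q"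
  by (induction q) (simp_all add: emb_pCons algebra_simps)

lemma emb_mult: "emb (p * q) = emb p * emb q"
  by (induction p) (simp_all add: emb_pCons emb_add emb_smult algebra_simps)

lemma emb_uminus: "emb (- p) = - emb p"
  using emb_add[of p "-p"] by (simp add: eq_neg_iff_add_eq_0 add.commute)

lemma emb_diff: "emb (p - q) = emb p - emb q"
  using emb_add[of p "-q"] emb_uminus[of q] by simp

lemma emb_1: "emb 1 = 1"
  by (simp add: emb_def)

lemma emb_nth: "fls_nth (emb p) n = (if n \<le> 0 then coeff p (nat (-n)) else 0)"
proof (induction p arbitrary: n)
  case 0 then show ?case by simp
next
  case (pCons a p)
  show ?case
  proof (cases "n \<le> 0")
    case True
    then obtain m where m: "n = - int m" by (metis neg_0_le_iff_le nonneg_eq_int minus_minus)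
    show ?thesis
    proof (cases m)
      case 0 then show ?thesis using m pCons.IH[of 1] by (simp add: emb_pCons fls_X_inv_times_conv_shift)
    next
      case (Suc k) then show ?thesis using m pCons.IH[of "n+1"] by (simp add: emb_pCons fls_X_inv_times_conv_shift nat_add_distrib)
    qed
  next
    case False then show ?thesis using pCons.IH[of "n+1"] by (simp add: emb_pCons fls_X_inv_times_conv_shift)
  qed
qed

lemma emb_eq0: "emb p = 0 \<longleftrightarrow> p = 0"
proof
  assume "emb p = 0"
  then have "coeff p n = 0" for n using emb_nth[of p "- int n"] by simp
  then show "p = 0" by (simp add: poly_eqI)
qed simp

lemma cardQ: "real (card (UNIV :: 'a::{finite,field} set)) \<ge> 2"
proof -
  have "{0::'a, 1} \<subseteq> UNIV" by simp
  then have "card {0::'a, 1} \<le> card (UNIV :: 'a set)" by (intro card_mono) auto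
  then show ?thesis by simp
qed

lemma absv_nonneg: "absv (x :: 'a::{finite,field} fls) \<ge> 0"
  by (simp add: absv_def)

lemma absv_pos: "(x :: 'a::{finite,field} fls) \<noteq> 0 \<Longrightarrow> absv x > 0"
  using cardQ[where 'a='a] by (simp add: absv_def)

lemma absv_0[simp]: "absv (0 :: 'a::{finite,field} fls) = 0"
  by (simp add: absv_def)

lemma absv_eq0: "absv (x :: 'a::{finite,field} fls) = 0 \<longleftrightarrow> x = 0"
  using absv_pos[of x] by (cases "x = 0") auto

lemma absv_mult: "absv ((x :: 'a::{finite,field} fls) * y) = absv x * absv y"
  using cardQ[where 'a='a] by (simp add: absv_def powr_add[symmetric] algebra_simps)

lemma absv_uminus: "absv (- (x :: 'a::{finite,field} fls)) = absv x"
  by (simp add: absv_def)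

lemma absv_add: "absv ((x :: 'a::{finite,field} fls) + y) \<le> max (absv x) (absv y)"
proof (cases "x = 0 \<or> y = 0 \<or> x + y = 0")
  case True then show ?thesis using absv_nonneg[of x] absv_nonneg[of y] by auto
next
  case False
  then have "fls_subdegree (x + y) \<ge> min (fls_subdegree x) (fls_subdegree y)"
    by (intro fls_plus_subdegree) auto
  then have "- real_of_int (fls_subdegree (x + y)) \<le> max (- real_of_int (fls_subdegree x)) (- real_of_int (fls_subdegree y))"
    by linarith
  then have "real (card (UNIV :: 'a set)) powr (- real_of_int (fls_subdegree (x + y))) \<le>
     real (card (UNIV :: 'a set)) powr (max (- real_of_int (fls_subdegree x)) (- real_of_int (fls_subdegree y)))"
    using cardQ[where 'a='a] by (intro powr_mono) auto
  also have "\<dots> = max (absv x) (absv y)" using False cardQ[where 'a='a]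
    by (simp add: absv_def max_def)
  finally show ?thesis using False by (simp add: absv_def)
qed

lemma absv_diff: "absv ((x :: 'a::{finite,field} fls) - y) \<le> max (absv x) (absv y)"
  using absv_add[of x "-y"] by (simp add: absv_uminus)

lemma absv_emb: "p \<noteq> 0 \<Longrightarrow> absv (emb (p :: 'a::{finite,field} poly)) \<ge> 1"
proof -
  assume p: "p \<noteq> 0"
  then have "fls_nth (emb p) (- int (degree p)) \<noteq> 0" by (simp add: emb_nth)
  then have "fls_subdegree (emb p) \<le> - int (degree p)" by (rule fls_subdegree_leI)
  then have "fls_subdegree (emb p) \<le> 0" by linarith
  then show ?thesis using p cardQ[where 'a='a] by (simp add: absv_def emb_eq0 ge_one_powr_ge_zero)
qed

context
begin

interpretation field_poly: 
  normalization_euclidean_semiring_multiplicative where zero = "0 :: 'a :: field poly"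
    and one = 1 and plus = plus and minus = minus
    and times = times
    and normalize = "\<lambda>p. smult (inverse (lead_coeff p)) p"
    and unit_factor = "\<lambda>p. [:lead_coeff p:]"
    and euclidean_size = "\<lambda>p. if p = 0 then 0 else 2 ^ degree p"
    and divide = divide and modulo = modulo
  rewrites "dvd.dvd (times :: 'a poly \<Rightarrow> _) = Rings.dvd"
    and "comm_monoid_mult.prod_mset times 1 = prod_mset"
    and "comm_semiring_1.irreducible times 1 0 = irreducible"
    and "comm_semiring_1.prime_elem times 1 0 = prime_elem"
proof -
  show "dvd.dvd (times :: 'a poly \<Rightarrow> _) = Rings.dvd"
    by (simp add: dvd_dict)
  show "comm_monoid_mult.prod_mset times 1 = prod_mset"
    by (simp add: prod_mset_dict)
  show "comm_semiring_1.irreducible times 1 0 = irreducible"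
    by (simp add: irreducible_dict)
  show "comm_semiring_1.prime_elem times 1 0 = prime_elem"
    by (simp add: prime_elem_dict)
  show "class.normalization_euclidean_semiring_multiplicative divide plus minus (0 :: 'a poly) times 1
    modulo (\<lambda>p. if p = 0 then 0 else 2 ^ degree p)
    (\<lambda>p. [:lead_coeff p:]) (\<lambda>p. smult (inverse (lead_coeff p)) p)"
  proof (standard, fold dvd_dict)
    fix p :: "'a poly"
    show "[:lead_coeff p:] * smult (inverse (lead_coeff p)) p = p"
      by (cases "p = 0") simp_all
  next
    fix p :: "'a poly" assume "is_unit p"
    then show "[:lead_coeff p:] = p"
      by (elim is_unit_polyE) (auto simp: monom_0 one_poly_def field_simps)
  next
    fix p :: "'a poly" assume "p \<noteq> 0"
    then show "is_unit [:lead_coeff p:]"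
      by (simp add: is_unit_pCons_iff)
  next
    fix a b :: "'a poly" assume "is_unit a"
    thus "[:lead_coeff (a * b):] = a * [:lead_coeff b:]"
      by (auto elim!: is_unit_polyE)
  qed (auto simp: lead_coeff_mult Rings.div_mult_mod_eq intro!: degree_mod_less' degree_mult_right_le)
qed

lemma nonsquare:
  fixes d a b :: "'a::field poly"
  assumes "squarefree d" "degree d > 0" "a^2 = d * b^2"
  shows "b = 0"
proof (rule ccontr)
  assume b: "b \<noteq> 0"
  have d0: "d \<noteq> 0" using assms(2) by auto
  have "\<not> is_unit d" using assms(2) by (simp add: is_unit_iff_degree d0)
  then obtain p where p: "p dvd d" "field_poly.prime p" using field_poly.prime_divisor_exists d0 by blast
  have pe: "prime_elem p" using p(2) by (rule field_poly.prime_imp_prime_elem)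
  have m1: "field_poly.multiplicity p d \<le> 1"
  proof (rule ccontr)
    assume "\<not> ?thesis"
    then have "power.power 1 (*) p 2 dvd d" using d0 pe
      using field_poly.power_dvd_iff_le_multiplicity[of d p 2] by (auto simp: prime_elem_not_unit)
    moreover have "power.power 1 (*) p 2 = p^2" by (simp add: power.power.simps power2_eq_square numeral_2_eq_2)
    ultimately have "p^2 dvd d" by simp
    then have "is_unit p" using assms(1) unfolding squarefree_def by blast
    then show False using pe by (simp add: prime_elem_not_unit)
  qed
  have m2: "field_poly.multiplicity p d \<ge> 1" using p d0 pe
    using field_poly.prime_elem_multiplicity_eq_zero_iff[of p d] by (simp add: Suc_le_eq)
  have a0: "a \<noteq> 0" using assms(3) b d0 by auto
  have "field_poly.multiplicity p (a^2) = 2 * field_poly.multiplicity p a"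
    using pe a0 field_poly.prime_elem_multiplicity_mult_distrib[of p a a] by (simp add: power2_eq_square)
  moreover have "field_poly.multiplicity p (d * b^2) = field_poly.multiplicity p d + 2 * field_poly.multiplicity p b"
    using pe b d0 field_poly.prime_elem_multiplicity_mult_distrib[of p b b] field_poly.prime_elem_multiplicity_mult_distrib[of p d "b*b"]
    by (simp add: power2_eq_square)
  ultimately have "2 * field_poly.multiplicity p a = field_poly.multiplicity p d + 2 * field_poly.multiplicity p b"
    using assms(3) by simp
  moreover have "field_poly.multiplicity p d = 1" using m1 m2 by linarith
  ultimately have "2 * field_poly.multiplicity p a = 1 + 2 * field_poly.multiplicity p b" by simp
  then show False by presburger
qed

end


lemma sig1_qmul: "sigma1 s (qmul (s*s) x y) = sigma1 s x * sigma1 s (y :: 'a::field fls \<times> 'a fls)"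
  by (simp add: sigma1_def qmul_def algebra_simps)

lemma sig2_qmul: "sigma2 s (qmul (s*s) x y) = sigma2 s x * sigma2 s (y :: 'a::field fls \<times> 'a fls)"
  by (simp add: sigma2_def qmul_def algebra_simps)

lemma sig12: "sigma1 s x * sigma2 s x = fst x ^ 2 - (s*s) * snd (x :: 'a::field fls \<times> 'a fls) ^ 2"
  by (simp add: sigma1_def sigma2_def algebra_simps power2_eq_square)

lemma sig1_pair_div: "sigma1 s (a / n, b / n) = sigma1 s (a, b) / (n :: 'a::field fls)"
  by (simp add: sigma1_def add_divide_distrib)

lemma sig2_pair_div: "sigma2 s (a / n, b / n) = sigma2 s (a, b) / (n :: 'a::field fls)"
  by (simp add: sigma2_def diff_divide_distrib)

lemma sig1_qdiv:
  assumes "sigma1 s w * sigma2 s w \<noteq> 0"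
  shows "sigma1 s (qdiv (s*s) z w) = sigma1 s z / sigma1 s (w :: 'a::field fls \<times> 'a fls)"
proof -
  have e: "sigma1 s (qmul (s*s) z (fst w, - snd w)) = sigma1 s z * sigma2 s w"
    by (simp add: qmul_def sigma1_def sigma2_def algebra_simps)
  have "sigma1 s (qdiv (s*s) z w) = sigma1 s (qmul (s*s) z (fst w, - snd w)) / (sigma1 s w * sigma2 s w)"
    using sig12[of s w] by (simp add: qdiv_def Let_def sig1_pair_div)
  also have "\<dots> = sigma1 s z / sigma1 s w" using assms by (simp add: e)
  finally show ?thesis .
qed

lemma sig2_qdiv:
  assumes "sigma1 s w * sigma2 s w \<noteq> 0"
  shows "sigma2 s (qdiv (s*s) z w) = sigma2 s z / sigma2 s (w :: 'a::field fls \<times> 'a fls)"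
proof -
  have e: "sigma2 s (qmul (s*s) z (fst w, - snd w)) = sigma2 s z * sigma1 s w"
    by (simp add: qmul_def sigma1_def sigma2_def algebra_simps)
  have "sigma2 s (qdiv (s*s) z w) = sigma2 s (qmul (s*s) z (fst w, - snd w)) / (sigma1 s w * sigma2 s w)"
    using sig12[of s w] by (simp add: qdiv_def Let_def sig2_pair_div)
  also have "\<dots> = sigma2 s z / sigma2 s w" using assms by (simp add: e)
  finally show ?thesis .
qed

definition npoly :: "'a::field poly \<Rightarrow> 'a poly \<times> 'a poly \<Rightarrow> 'a poly" where
  "npoly d p = fst p ^ 2 - d * snd p ^ 2"

lemma embA_qmul: "embA (qmul d x y) = qmul (emb d) (embA x) (embA y)"
  by (simp add: embA_def qmul_def emb_add emb_mult)

lemma normN_emb: "s * s = emb d \<Longrightarrow> normN s (embA p) = absv (emb (npoly d p))"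
  by (simp add: normN_def sig12 npoly_def emb_diff emb_mult power2_eq_square embA_def)

lemma normN_mult: "s * s = emb d \<Longrightarrow>
   normN s (embA (qmul d x y)) = normN s (embA x) * normN s (embA (y :: 'a::{finite,field} poly \<times> 'a poly))"
proof -
  assume h: "s * s = emb d"
  have "normN s (embA (qmul d x y)) = absv ((sigma1 s (embA x) * sigma2 s (embA x)) * (sigma1 s (embA y) * sigma2 s (embA y)))"
    unfolding normN_def embA_qmul h[symmetric] sig1_qmul sig2_qmul by (simp add: ac_simps)
  then show ?thesis by (simp add: normN_def absv_mult)
qed

lemma normN_ge1: "s * s = emb d \<Longrightarrow> normN s (embA p) \<noteq> 0 \<Longrightarrow> normN s (embA (p :: 'a::{finite,field} poly \<times> 'a poly)) \<ge> 1"
  by (simp add: normN_emb) (metis absv_emb absv_0 emb_0)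

lemma normN_zero:
  assumes "s * s = emb d" "squarefree d" "degree d > 0" "normN s (embA (p :: 'a::{finite,field} poly \<times> 'a poly)) < 1"
  shows "p = (0, 0)"
proof -
  have "absv (emb (npoly d p)) < 1" using assms normN_emb by metis
  then have "npoly d p = 0" using absv_emb by force
  then have "fst p ^ 2 = d * snd p ^ 2" by (simp add: npoly_def)
  then have "snd p = 0" using nonsquare assms(2,3) by blast
  moreover then have "fst p = 0" using \<open>fst p ^ 2 = d * snd p ^ 2\<close> by simp
  ultimately show ?thesis by (simp add: prod_eq_iff)
qed

lemma frac_lt: "fracnorm x < e \<Longrightarrow> \<exists>r. absv (x - emb r) < e"
  unfolding fracnorm_def using cInf_lessD[of "range (\<lambda>r. absv (x - emb r))" e] by auto


lemma coprime_div:
  fixes d :: "'a::comm_ring_1"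
  assumes "fst (qmul d x w) + fst (qmul d y z) = 1" "snd (qmul d x w) + snd (qmul d y z) = 0"
   "qmul d k z = qmul d m w"
  shows "k = qmul d (fst (qmul d k x) + fst (qmul d y m), snd (qmul d k x) + snd (qmul d y m)) w"
proof -
  obtain x1 x2 where x: "x = (x1, x2)" by (cases x)
  obtain y1 y2 where y: "y = (y1, y2)" by (cases y)
  obtain z1 z2 where z: "z = (z1, z2)" by (cases z)
  obtain w1 w2 where w: "w = (w1, w2)" by (cases w)
  obtain k1 k2 where k: "k = (k1, k2)" by (cases k)
  obtain m1 m2 where m: "m = (m1, m2)" by (cases m)
  have h1: "x1*w1 + d*x2*w2 + (y1*z1 + d*y2*z2) = 1" using assms(1) by (simp add: x y z w qmul_def)
  have h2: "x1*w2 + x2*w1 + (y1*z2 + y2*z1) = 0" using assms(2) by (simp add: x y z w qmul_def)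
  have h3: "k1*z1 + d*k2*z2 = m1*w1 + d*m2*w2" using assms(3) by (simp add: k m z w qmul_def prod_eq_iff)
  have h4: "k1*z2 + k2*z1 = m1*w2 + m2*w1" using assms(3) by (simp add: k m z w qmul_def prod_eq_iff)
  have e1: "k1 = (k1*x1 + d*k2*x2 + (y1*m1 + d*y2*m2)) * w1 + d * (k1*x2 + k2*x1 + (y1*m2 + y2*m1)) * w2"
  proof -
    have "k1 = k1 * (x1*w1 + d*x2*w2 + (y1*z1 + d*y2*z2)) + d * k2 * (x1*w2 + x2*w1 + (y1*z2 + y2*z1))"
      using h1 h2 by simp
    also have "\<dots> = (k1*x1 + d*k2*x2) * w1 + d * (k1*x2 + k2*x1) * w2 + y1 * (k1*z1 + d*k2*z2) + d * y2 * (k1*z2 + k2*z1)"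
      by (simp add: algebra_simps)
    also have "\<dots> = (k1*x1 + d*k2*x2 + (y1*m1 + d*y2*m2)) * w1 + d * (k1*x2 + k2*x1 + (y1*m2 + y2*m1)) * w2"
      using h3 h4 by (simp add: algebra_simps)
    finally show ?thesis .
  qed
  have e2: "k2 = (k1*x1 + d*k2*x2 + (y1*m1 + d*y2*m2)) * w2 + (k1*x2 + k2*x1 + (y1*m2 + y2*m1)) * w1"
  proof -
    have "k2 = k2 * (x1*w1 + d*x2*w2 + (y1*z1 + d*y2*z2)) + k1 * (x1*w2 + x2*w1 + (y1*z2 + y2*z1))"
      using h1 h2 by simp
    also have "\<dots> = (k1*x1 + d*k2*x2) * w2 + (k1*x2 + k2*x1) * w1 + y1 * (k1*z2 + k2*z1) + y2 * (k1*z1 + d*k2*z2)"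
      by (simp add: algebra_simps)
    also have "\<dots> = (k1*x1 + d*k2*x2 + (y1*m1 + d*y2*m2)) * w2 + (k1*x2 + k2*x1 + (y1*m2 + y2*m1)) * w1"
      using h3 h4 by (simp add: algebra_simps)
    finally show ?thesis .
  qed
  show ?thesis using e1 e2 by (simp add: x y z w k m qmul_def algebra_simps)
qed


lemma absv_sig_small:
  assumes "absv (a :: 'a::{finite,field} fls) < e" "absv b < e"
  shows "absv (a + b * s) < e * (1 + absv s)" "absv (a - b * s) < e * (1 + absv s)"
proof -
  have e0: "e > 0" using assms(1) absv_nonneg[of a] by linarith
  have "absv (b * s) \<le> e * absv s" using assms(2) absv_nonneg[of s] by (simp add: absv_mult mult_right_mono)
  moreover have "e \<le> e * (1 + absv s)" using e0 absv_nonneg[of s] by (simp add: algebra_simps)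
  moreover have "e * absv s < e * (1 + absv s)" using e0 by simp
  ultimately have "max (absv a) (absv (b * s)) < e * (1 + absv s)" using assms(1) by auto
  then show "absv (a + b * s) < e * (1 + absv s)" "absv (a - b * s) < e * (1 + absv s)"
    using absv_add[of a "b*s"] absv_diff[of a "b*s"] by linarith+
qed

lemma prod_lt1:
  fixes X Y B C :: real
  assumes "0 \<le> X" "X < B" "0 \<le> Y" "Y \<le> C" "B * C = 1" "C > 0"
  shows "X * Y < 1"
proof -
  have "X * Y \<le> X * C" using assms by (simp add: mult_left_mono)
  also have "\<dots> < B * C" using assms by (intro mult_strict_right_mono) auto
  finally show ?thesis using assms(5) by simp
qed

theorem mainTheorem11:
  fixes d :: "'a::{finite,field} poly" and s :: "'a fls" and c :: real
  assumes "odd (card (UNIV :: 'a set))"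
    and "lead_coeff d = 1" and "squarefree d" and "even (degree d)" and "degree d > 0"
    and "s * s = emb d"
    and "c \<ge> 1"
  shows "\<exists>c'>0. \<forall>w z :: 'a poly \<times> 'a poly.
           w \<noteq> (0, 0) \<and> coprimeA d w z \<and>
           inverse c * sqrt (normN s (embA w)) \<le> absv (sigma1 s (embA w)) \<and>
           absv (sigma1 s (embA w)) \<le> c * sqrt (normN s (embA w)) \<and>
           inverse c * sqrt (normN s (embA w)) \<le> absv (sigma2 s (embA w)) \<and>
           absv (sigma2 s (embA w)) \<le> c * sqrt (normN s (embA w)) \<longrightarrow>
           (\<forall>k :: 'a poly \<times> 'a poly.
              0 < normN s (embA k) \<and> normN s (embA k) < normN s (embA w) \<longrightarrow>
              max (fracnorm (fst (qmul (emb d) (embA k) (qdiv (emb d) (embA z) (embA w)))))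
                  (fracnorm (snd (qmul (emb d) (embA k) (qdiv (emb d) (embA z) (embA w)))))
                \<ge> c' * normN s (embA w) powr (-1/2))"
proof -
  define S where "S = absv s"
  have S0: "S \<ge> 0" by (simp add: S_def absv_nonneg)
  define c' where "c' = inverse (c * (1 + S))"
  have c'0: "c' > 0" using S0 assms(7) by (simp add: c'_def)
  have main: "max (fracnorm (fst (qmul (emb d) (embA k) (qdiv (emb d) (embA z) (embA w)))))
                  (fracnorm (snd (qmul (emb d) (embA k) (qdiv (emb d) (embA z) (embA w)))))
                \<ge> c' * normN s (embA w) powr (-1/2)"
    if cop: "coprimeA d w z"
      and b1: "absv (sigma1 s (embA w)) \<le> c * sqrt (normN s (embA w))"
      and b2: "absv (sigma2 s (embA w)) \<le> c * sqrt (normN s (embA w))"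
      and k0: "0 < normN s (embA k)" and kW: "normN s (embA k) < normN s (embA w)"
    for w z k :: "'a poly \<times> 'a poly"
  proof (rule ccontr)
    define W where "W = normN s (embA w)"
    define D where "D = emb d"
    have D: "D = s * s" using assms(6) by (simp add: D_def)
    define t where "t = qmul D (embA k) (qdiv D (embA z) (embA w))"
    define \<delta> where "\<delta> = c' * W powr (-1/2)"
    assume "\<not> ?thesis"
    then have lt: "fracnorm (fst t) < \<delta>" "fracnorm (snd t) < \<delta>"
      by (simp_all add: t_def \<delta>_def W_def D_def)
    obtain r1 where r1: "absv (fst t - emb r1) < \<delta>" using frac_lt[OF lt(1)] by blast
    obtain r2 where r2: "absv (snd t - emb r2) < \<delta>" using frac_lt[OF lt(2)] by blast
    have W0: "W > 0" using k0 kW by (simp add: W_def)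
    have n0: "sigma1 s (embA w) * sigma2 s (embA w) \<noteq> 0"
      using W0 by (auto simp: W_def normN_def)
    have s1w: "sigma1 s (embA w) \<noteq> 0" and s2w: "sigma2 s (embA w) \<noteq> 0" using n0 by auto
    define m where "m = (r1, r2)"
    define e where "e = (fst (qmul d k z) - fst (qmul d m w), snd (qmul d k z) - snd (qmul d m w))"
    define \<epsilon> where "\<epsilon> = (fst t - emb r1, snd t - emb r2)"
    have embAe: "embA e = (fst (embA (qmul d k z)) - fst (embA (qmul d m w)), snd (embA (qmul d k z)) - snd (embA (qmul d m w)))"
      by (simp add: e_def embA_def emb_diff)
    have key1: "sigma1 s (embA e) = sigma1 s \<epsilon> * sigma1 s (embA w)"
    proof -
      have "sigma1 s (embA e) = sigma1 s (embA (qmul d k z)) - sigma1 s (embA (qmul d m w))"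
        by (simp add: embAe sigma1_def algebra_simps)
      also have "\<dots> = sigma1 s (embA k) * sigma1 s (embA z) - sigma1 s (embA m) * sigma1 s (embA w)"
        by (simp add: embA_qmul D_def[symmetric] D sig1_qmul)
      also have "\<dots> = (sigma1 s t - sigma1 s (embA m)) * sigma1 s (embA w)"
        proof -
        have "sigma1 s t = sigma1 s (embA k) * (sigma1 s (embA z) / sigma1 s (embA w))"
          by (simp add: t_def D sig1_qmul sig1_qdiv[OF n0])
        moreover have "sigma1 s (embA z) / sigma1 s (embA w) * sigma1 s (embA w) = sigma1 s (embA z)"
          using s1w by simp
        ultimately show ?thesis using s1w s2w by (simp add: algebra_simps)
      qed
      also have "sigma1 s t - sigma1 s (embA m) = sigma1 s \<epsilon>"
        by (simp add: \<epsilon>_def m_def embA_def sigma1_def algebra_simps)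
      finally show ?thesis .
    qed
    have key2: "sigma2 s (embA e) = sigma2 s \<epsilon> * sigma2 s (embA w)"
    proof -
      have "sigma2 s (embA e) = sigma2 s (embA (qmul d k z)) - sigma2 s (embA (qmul d m w))"
        by (simp add: embAe sigma2_def algebra_simps)
      also have "\<dots> = sigma2 s (embA k) * sigma2 s (embA z) - sigma2 s (embA m) * sigma2 s (embA w)"
        by (simp add: embA_qmul D_def[symmetric] D sig2_qmul)
      also have "\<dots> = (sigma2 s t - sigma2 s (embA m)) * sigma2 s (embA w)"
        proof -
        have "sigma2 s t = sigma2 s (embA k) * (sigma2 s (embA z) / sigma2 s (embA w))"
          by (simp add: t_def D sig2_qmul sig2_qdiv[OF n0])
        moreover have "sigma2 s (embA z) / sigma2 s (embA w) * sigma2 s (embA w) = sigma2 s (embA z)"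
          using s2w by simp
        ultimately show ?thesis using s1w s2w by (simp add: algebra_simps)
      qed
      also have "sigma2 s t - sigma2 s (embA m) = sigma2 s \<epsilon>"
        by (simp add: \<epsilon>_def m_def embA_def sigma2_def algebra_simps)
      finally show ?thesis .
    qed
    have eps1: "absv (sigma1 s \<epsilon>) < \<delta> * (1 + S)"
      using absv_sig_small(1)[OF r1 r2, of s] by (simp add: \<epsilon>_def sigma1_def S_def)
    have eps2: "absv (sigma2 s \<epsilon>) < \<delta> * (1 + S)"
      using absv_sig_small(2)[OF r1 r2, of s] by (simp add: \<epsilon>_def sigma2_def S_def)
    have BC: "(\<delta> * (1 + S)) * (c * sqrt W) = 1"
    proof -
      have "W powr (-1/2) * sqrt W = W powr (-1/2) * W powr (1/2)" using W0 by (simp add: powr_half_sqrt)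
      also have "\<dots> = 1" using W0 by (simp add: powr_add[symmetric])
      finally have h: "W powr (-1/2) * sqrt W = 1" .
      have cc: "c' * (c * (1 + S)) = 1" using S0 assms(7) unfolding c'_def by (intro left_inverse) auto
      have "(\<delta> * (1 + S)) * (c * sqrt W) = (c' * (c * (1 + S))) * (W powr (-1/2) * sqrt W)"
        unfolding \<delta>_def by (simp only: ac_simps)
      also have "\<dots> = 1" using h cc by simp
      finally show ?thesis .
    qed
    have C0: "c * sqrt W > 0" using W0 assms(7) by simp
    have a1: "absv (sigma1 s (embA e)) < 1"
      unfolding key1 absv_mult
      by (rule prod_lt1[OF absv_nonneg eps1 absv_nonneg _ BC C0]) (use b1 in \<open>simp add: W_def\<close>)
    have a2: "absv (sigma2 s (embA e)) < 1"
      unfolding key2 absv_mult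
      by (rule prod_lt1[OF absv_nonneg eps2 absv_nonneg _ BC C0]) (use b2 in \<open>simp add: W_def\<close>)
    have "normN s (embA e) < 1"
    proof -
      have "normN s (embA e) = absv (sigma1 s (embA e)) * absv (sigma2 s (embA e))"
        by (simp add: normN_def absv_mult)
      also have "\<dots> \<le> absv (sigma1 s (embA e))" using a2 absv_nonneg[of "sigma1 s (embA e)"] absv_nonneg[of "sigma2 s (embA e)"]
        by (simp add: mult_left_le)
      finally show ?thesis using a1 by linarith
    qed
    then have "e = (0, 0)" using normN_zero assms(6,3,5) by blast
    then have kzmw: "qmul d k z = qmul d m w" by (simp add: e_def prod_eq_iff)
    obtain x y where xy: "fst (qmul d x w) + fst (qmul d y z) = 1" "snd (qmul d x w) + snd (qmul d y z) = 0"
      using cop unfolding coprimeA_def by blast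
    define u where "u = (fst (qmul d k x) + fst (qmul d y m), snd (qmul d k x) + snd (qmul d y m))"
    have "k = qmul d u w" unfolding u_def by (rule coprime_div[OF xy kzmw])
    then have "normN s (embA k) = normN s (embA u) * W"
      using normN_mult[OF assms(6), of u w] by (simp add: W_def)
    moreover have "normN s (embA u) \<noteq> 0" using k0 calculation by auto
    then have "normN s (embA u) \<ge> 1" using normN_ge1[OF assms(6)] by blast
    ultimately have "normN s (embA k) \<ge> W" using W0 by simp
    then show False using kW by (simp add: W_def)
  qed
  show ?thesis
    by (rule exI[of _ c'], intro conjI c'0 allI impI, use main in blast)
qed

end
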